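(* Let $\mathcal B=(\mathcal L,\mathcal R,\omega,\lambda,\rho)$ be a bimachine realizing a transduction $f$. Then $\mathcal L\sqsubseteq \mathit{Left}_f(\mathcal R)$ and $\mathcal R\sqsubseteq\mathit{Right}_f(\mathcal L)$.
   Context: Notation: for words $u\preceq v$ (prefix), $u^{-1}v$ is the word $v'$ with $uv'=v$; $\bigwedge L$ is the longest common prefix of the words of $L$ ($\bigwedge\emptyset=\varepsilon$). A transduction is a partial function $f:\Sigma^*\to\Sigma^*$. A (left) automaton here is a complete deterministic automaton $\mathcal L$ with initial state $l_0$; $[u]_{\mathcal L}$ denotes the state reached from $l_0$ on $u$, and $u\sim_{\mathcal L}v$ iff $[u]_{\mathcal L}=[v]_{\mathcal L}$. A right automaton $\mathcal R=(Q,\Delta,\{r_0\},F)$ is an automaton that is backward deterministic and backward complete (for each $q,\sigma$ there is exactly one $p$ with $(p,\sigma,q)\in\Delta$); it reads words right to left: $[u]_{\mathcal R}$ is the unique state $p$ with a run on $u$ from $p$ to $r_0$, $u$ is accepted iff $[u]_{\mathcal R}\in F$, and $u\sim_{\mathcal R}v$ iff $[u]_{\mathcal R}=[v]_{\mathcal R}$. For two left (resp. right) automata, $\mathcal A_1\sqsubseteq\mathcal A_2$ means $u\sim_{\mathcal A_1}v\Rightarrow u\sim_{\mathcal A_2}v$. A bimachine $\mathcal B=(\mathcal L,\mathcal R,\omega,\lambda,\rho)$ consists of a left automaton $\mathcal L$ (states $Q_{\mathcal L}$, finals $F_{\mathcal L}$) and a right automaton $\mathcal R$ (states $Q_{\mathcal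 R}$, finals $F_{\mathcal R}$) accepting the same language, $\omega:Q_{\mathcal L}\times\Sigma\times Q_{\mathcal R}\to\Sigma^*$, $\lambda:F_{\mathcal R}\to\Sigma^*$, $\rho:F_{\mathcal L}\to\Sigma^*$. It realizes the transduction with domain the accepted language and $u\mapsto\lambda([u]_{\mathcal R})\,\omega([u[1..0]]_{\mathcal L},u[1],[u[2..n]]_{\mathcal R})\cdots\omega([u[1..n-1]]_{\mathcal L},u[n],[\varepsilon]_{\mathcal R})\,\rho([u]_{\mathcal L})$ where $n=|u|$. Left minimization: given $f$ and a right automaton $\mathcal R$ with accepted language $\mathrm{dom}(f)$, let $\widehat f_{[w]_{\mathcal R}}(u)=\bigwedge\{f(uv)\mid v\sim_{\mathcal R}w,\ uv\in\mathrm{dom}(f)\}$, and define $u\sim_L v$ iff for all $w$: $uw\in\mathrm{dom}(f)\Leftrightarrow vw\in\mathrm{dom}(f)$, and if $uw\in\mathrm{dom}(f)$ then $\widehat f_{[w]_{\mathcal R}}(u)^{-1}f(uw)=\widehat f_{[w]_{\mathcal R}}(v)^{-1}f(vw)$. This is a right congruence; $\mathit{Left}_f(\mathcal R)$ is the deterministic automaton with states $\Sigma^*/{\sim_L}$, transitions $([u],\sigma,[u\sigma])$, initial state $[\varepsilon]$ and final states $\{[u]\mid u\in\mathrm{dom}(f)\}$. $\mathit{Right}_f(\mathcal L)$ is defined symmetrically (mirror construction): it is the right automaton obtained by applying $\mathit{Left}$ to the mirrored transduction $w\mapsto \overline{f(\overline w)}$ (where $\overline{x}$ is the mirror image of $x$)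 and the mirror of $\mathcal L$, and mirroring the result back. *)

theory Defs
  imports Main "HOL-Library.Sublist"
begin

text \<open>Longest common prefix of a set of words (the greatest lower bound in the
  prefix order); by convention it is the empty word for the empty set.\<close>
definition lcp :: "'a list set \<Rightarrow> 'a list" where
  "lcp L = (if L = {} then []
            else (THE w. (\<forall>x\<in>L. prefix w x) \<and> (\<forall>w'. (\<forall>x\<in>L. prefix w' x) \<longrightarrow> prefix w' w)))"

text \<open>Residual u^{-1} v (only used when u is a prefix of v).\<close>
definition lquot :: "'a list \<Rightarrow> 'a list \<Rightarrow> 'a list" where
  "lquot u v = drop (length u) v"

record ('s, 'a) left_aut =
  lstates :: "'s set"
  ltrans  :: "'s \<Rightarrow> 'a \<Rightarrow> 's"
  linit   :: 's
  lfinal  :: "'s set"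

definition left_automaton :: "('s, 'a) left_aut \<Rightarrow> bool" where
  "left_automaton A \<longleftrightarrow> finite (lstates A) \<and> linit A \<in> lstates A \<and> lfinal A \<subseteq> lstates A
     \<and> (\<forall>q\<in>lstates A. \<forall>\<sigma>. ltrans A q \<sigma> \<in> lstates A)"

definition lstate :: "('s, 'a) left_aut \<Rightarrow> 'a list \<Rightarrow> 's" where
  "lstate A u = foldl (ltrans A) (linit A) u"

text \<open>A right automaton: backward deterministic and backward complete, so the
  transition relation is given by a function: rtrans A q \<sigma> is the unique p with
  (p, \<sigma>, q) a transition.\<close>
record ('s, 'a) right_aut =
  rstates :: "'s set"
  rtrans  :: "'s \<Rightarrow> 'a \<Rightarrow> 's"
  rinit   :: 's
  rfinal  :: "'s set"

definition right_automaton :: "('s, 'a) right_aut \<Rightarrow> bool" where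
  "right_automaton A \<longleftrightarrow> finite (rstates A) \<and> rinit A \<in> rstates A \<and> rfinal A \<subseteq> rstates A
     \<and> (\<forall>q\<in>rstates A. \<forall>\<sigma>. rtrans A q \<sigma> \<in> rstates A)"

text \<open>[u]_R: the unique state p with a run on u from p to the initial state r0
  (the word is read right to left).\<close>
definition rstate :: "('s, 'a) right_aut \<Rightarrow> 'a list \<Rightarrow> 's" where
  "rstate A u = foldr (\<lambda>\<sigma> q. rtrans A q \<sigma>) u (rinit A)"

definition left_refines :: "('s, 'a) left_aut \<Rightarrow> ('t, 'a) left_aut \<Rightarrow> bool" where
  "left_refines A1 A2 \<longleftrightarrow> (\<forall>u v. lstate A1 u = lstate A1 v \<longrightarrow> lstate A2 u = lstate A2 v)"

definition right_refines :: "('s, 'a) right_aut \<Rightarrow> ('t, 'a) right_aut \<Rightarrow> bool" where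
  "right_refines A1 A2 \<longleftrightarrow> (\<forall>u v. rstate A1 u = rstate A1 v \<longrightarrow> rstate A2 u = rstate A2 v)"

definition bm_output ::
  "('l, 'a) left_aut \<Rightarrow> ('r, 'a) right_aut \<Rightarrow> ('l \<Rightarrow> 'a \<Rightarrow> 'r \<Rightarrow> 'a list)
    \<Rightarrow> ('r \<Rightarrow> 'a list) \<Rightarrow> ('l \<Rightarrow> 'a list) \<Rightarrow> 'a list \<Rightarrow> 'a list" where
  "bm_output L R \<omega> lam \<rho> u =
     lam (rstate R u)
     @ concat (map (\<lambda>i. \<omega> (lstate L (take i u)) (u ! i) (rstate R (drop (Suc i) u))) [0..<length u])
     @ \<rho> (lstate L u)"

text \<open>(L, R, \<omega>, \<lambda>, \<rho>) is a bimachine realizing f.  The functions \<omega>, \<lambda>, \<rho> are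
  total here but only their values on Q_L x \<Sigma> x Q_R, F_R, F_L matter.\<close>
definition bimachine_realizes ::
  "('l, 'a) left_aut \<Rightarrow> ('r, 'a) right_aut \<Rightarrow> ('l \<Rightarrow> 'a \<Rightarrow> 'r \<Rightarrow> 'a list)
    \<Rightarrow> ('r \<Rightarrow> 'a list) \<Rightarrow> ('l \<Rightarrow> 'a list) \<Rightarrow> ('a list \<Rightarrow> 'a list option) \<Rightarrow> bool" where
  "bimachine_realizes L R \<omega> lam \<rho> f \<longleftrightarrow>
     left_automaton L \<and> right_automaton R
     \<and> (\<forall>u. lstate L u \<in> lfinal L \<longleftrightarrow> rstate R u \<in> rfinal R)
     \<and> (\<forall>u. f u = (if lstate L u \<in> lfinal L then Some (bm_output L R \<omega> lam \<rho> u) else None))"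

definition fhat :: "('a list \<Rightarrow> 'a list option) \<Rightarrow> ('s, 'a) right_aut \<Rightarrow> 'a list \<Rightarrow> 'a list \<Rightarrow> 'a list" where
  "fhat f R w u = lcp {the (f (u @ v)) | v. rstate R v = rstate R w \<and> u @ v \<in> dom f}"

definition left_rel :: "('a list \<Rightarrow> 'a list option) \<Rightarrow> ('s, 'a) right_aut \<Rightarrow> 'a list \<Rightarrow> 'a list \<Rightarrow> bool" where
  "left_rel f R u v \<longleftrightarrow> (\<forall>w. (u @ w \<in> dom f \<longleftrightarrow> v @ w \<in> dom f)
      \<and> (u @ w \<in> dom f \<longrightarrow>
           lquot (fhat f R w u) (the (f (u @ w))) = lquot (fhat f R w v) (the (f (v @ w)))))"

definition left_class :: "('a list \<Rightarrow> 'a list option) \<Rightarrow> ('s, 'a) right_aut \<Rightarrow> 'a list \<Rightarrow> 'a list set" where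
  "left_class f R u = {v. left_rel f R u v}"

definition Left_aut :: "('a list \<Rightarrow> 'a list option) \<Rightarrow> ('s, 'a) right_aut \<Rightarrow> ('a list set, 'a) left_aut" where
  "Left_aut f R =
     \<lparr> lstates = range (left_class f R),
       ltrans = (\<lambda>X \<sigma>. left_class f R ((SOME u. u \<in> X) @ [\<sigma>])),
       linit = left_class f R [],
       lfinal = {left_class f R u | u. u \<in> dom f} \<rparr>"

definition mirror_trans :: "('a list \<Rightarrow> 'a list option) \<Rightarrow> ('a list \<Rightarrow> 'a list option)" where
  "mirror_trans f = (\<lambda>w. map_option rev (f (rev w)))"

text \<open>The mirror of a left automaton is a right automaton and vice versa; the
  components are unchanged, only the reading direction is swapped.\<close>
definition mirror_left :: "('s, 'a) left_aut \<Rightarrow> ('s, 'a) right_aut" where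
  "mirror_left A = \<lparr> rstates = lstates A, rtrans = ltrans A, rinit = linit A, rfinal = lfinal A \<rparr>"

definition Right_aut :: "('a list \<Rightarrow> 'a list option) \<Rightarrow> ('s, 'a) left_aut \<Rightarrow> ('a list set, 'a) right_aut" where
  "Right_aut f L = mirror_left (Left_aut (mirror_trans f) (mirror_left L))"

end

theory Submission
  imports Defs
begin

lemma lcp_eq:
  assumes "L \<noteq> {}" "\<forall>x\<in>L. prefix w x" "\<forall>w'. (\<forall>x\<in>L. prefix w' x) \<longrightarrow> prefix w' w"
  shows "lcp L = w"
  unfolding lcp_def using assms
  by (auto intro!: the_equality intro: prefix_order.antisym)

lemma lcp_props:
  assumes "L \<noteq> {}"
  shows "(\<forall>x\<in>L. prefix (lcp L) x) \<and> (\<forall>w'. (\<forall>x\<in>L. prefix w' x) \<longrightarrow> prefix w' (lcp L))"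
proof -
  have "lcp L = Longest_common_prefix L"
    using assms by (intro lcp_eq) (auto intro: Longest_common_prefix_prefix Longest_common_prefix_max_prefix)
  thus ?thesis using assms
    by (auto intro: Longest_common_prefix_prefix Longest_common_prefix_max_prefix)
qed

lemma lcp_append:
  assumes "L \<noteq> {}"
  shows "lcp ((@) h ` L) = h @ lcp L"
proof (rule lcp_eq)
  show "(@) h ` L \<noteq> {}" using assms by auto
  show "\<forall>x\<in>(@) h ` L. prefix (h @ lcp L) x" using lcp_props[OF assms] by auto
  show "\<forall>w'. (\<forall>x\<in>(@) h ` L. prefix w' x) \<longrightarrow> prefix w' (h @ lcp L)"
  proof (intro allI impI)
    fix w' assume H: "\<forall>x\<in>(@) h ` L. prefix w' x"
    obtain x0 where x0: "x0 \<in> L" using assms by auto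
    have "prefix w' (h @ x0)" using H x0 by auto
    moreover have "prefix h (h @ x0)" by simp
    ultimately have "prefix w' h \<or> prefix h w'" using prefix_same_cases by blast
    thus "prefix w' (h @ lcp L)"
    proof
      assume "prefix w' h" thus ?thesis by (metis prefix_order.trans prefixI)
    next
      assume "prefix h w'"
      then obtain z where z: "w' = h @ z" by (auto simp: prefix_def)
      have "\<forall>x\<in>L. prefix z x" using H z by auto
      hence "prefix z (lcp L)" using lcp_props[OF assms] by blast
      thus ?thesis using z by simp
    qed
  qed
qed

lemma fhat_cong: "rstate R w = rstate R w' \<Longrightarrow> fhat f R w u = fhat f R w' u"
  unfolding fhat_def by simp

lemma fhat_prefix:
  assumes "u @ w \<in> dom f"
  shows "prefix (fhat f R w u) (the (f (u @ w)))"
proof -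
  let ?S = "{the (f (u @ v)) | v. rstate R v = rstate R w \<and> u @ v \<in> dom f}"
  have "the (f (u @ w)) \<in> ?S" using assms by auto
  hence "?S \<noteq> {}" by auto
  with lcp_props[OF this] \<open>the (f (u @ w)) \<in> ?S\<close> show ?thesis unfolding fhat_def by blast
qed

lemma fhat_decomp:
  assumes "u @ w \<in> dom f"
  shows "the (f (u @ w)) = fhat f R w u @ lquot (fhat f R w u) (the (f (u @ w)))"
  using fhat_prefix[OF assms, of R] unfolding lquot_def
  by (metis append_take_drop_id prefix_def append_eq_conv_conj)

lemma left_rel_refl: "left_rel f R u u"
  unfolding left_rel_def by simp

lemma left_rel_sym: "left_rel f R u v \<Longrightarrow> left_rel f R v u"
  unfolding left_rel_def by metis

lemma left_rel_trans: "left_rel f R u v \<Longrightarrow> left_rel f R v x \<Longrightarrow> left_rel f R u x"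
  unfolding left_rel_def by metis

lemma rstate_Cons: "rstate R (\<sigma> # w) = rtrans R (rstate R w) \<sigma>"
  unfolding rstate_def by simp

lemma left_rel_cong:
  assumes uv: "left_rel f R u v"
  shows "left_rel f R (u @ [\<sigma>]) (v @ [\<sigma>])"
  unfolding left_rel_def
proof (intro allI conjI impI)
  fix w'
  have D: "\<And>w. u @ w \<in> dom f \<longleftrightarrow> v @ w \<in> dom f" using uv unfolding left_rel_def by blast
  have Res: "\<And>w. u @ w \<in> dom f \<Longrightarrow>
     lquot (fhat f R w u) (the (f (u @ w))) = lquot (fhat f R w v) (the (f (v @ w)))"
    using uv unfolding left_rel_def by blast
  show "(u @ [\<sigma>]) @ w' \<in> dom f \<longleftrightarrow> (v @ [\<sigma>]) @ w' \<in> dom f" using D[of "\<sigma> # w'"] by simp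
  assume dw: "(u @ [\<sigma>]) @ w' \<in> dom f"
  define W where "W = {v'. rstate R v' = rstate R w' \<and> u @ \<sigma> # v' \<in> dom f}"
  define res where "res x w = lquot (fhat f R w x) (the (f (x @ w)))" for x w
  define T where "T = (\<lambda>v'. res u (\<sigma> # v')) ` W"
  have WV: "W = {v'. rstate R v' = rstate R w' \<and> v @ \<sigma> # v' \<in> dom f}"
    unfolding W_def using D by blast
  have TV: "T = (\<lambda>v'. res v (\<sigma> # v')) ` W"
    unfolding T_def
  proof (rule image_cong[OF refl])
    fix v' assume "v' \<in> W"
    thus "res u (\<sigma> # v') = res v (\<sigma> # v')"
      using Res W_def unfolding res_def by simp
  qed
  have w'W: "w' \<in> W" using dw W_def by simp
  have Tne: "T \<noteq> {}" using w'W T_def by auto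
  have gen: "fhat f R w' (x @ [\<sigma>]) = fhat f R (\<sigma> # w') x @ lcp T
      \<and> lquot (fhat f R w' (x @ [\<sigma>])) (the (f ((x @ [\<sigma>]) @ w'))) = lquot (lcp T) (res x (\<sigma> # w'))"
    if Wx: "W = {v'. rstate R v' = rstate R w' \<and> x @ \<sigma> # v' \<in> dom f}"
    and Tx: "T = (\<lambda>v'. res x (\<sigma> # v')) ` W" for x
  proof -
    let ?h = "fhat f R (\<sigma> # w') x"
    have S1: "{the (f ((x @ [\<sigma>]) @ v')) | v'. rstate R v' = rstate R w' \<and> (x @ [\<sigma>]) @ v' \<in> dom f}
        = (\<lambda>v'. the (f (x @ \<sigma> # v'))) ` W"
      unfolding Wx by auto
    have S2: "(\<lambda>v'. the (f (x @ \<sigma> # v'))) ` W = (@) ?h ` T"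
      unfolding Tx image_image
    proof (rule image_cong[OF refl])
      fix v' assume vW: "v' \<in> W"
      have "fhat f R (\<sigma> # v') x = ?h"
        using vW Wx by (intro fhat_cong) (simp add: rstate_Cons)
      thus "the (f (x @ \<sigma> # v')) = ?h @ res x (\<sigma> # v')"
        using fhat_decomp[of x "\<sigma> # v'" f R] vW Wx unfolding res_def by simp
    qed
    have "{the (f ((x @ [\<sigma>]) @ v')) | v'. rstate R v' = rstate R w' \<and> (x @ [\<sigma>]) @ v' \<in> dom f}
        = (@) ?h ` T" using S1 S2 by simp
    hence h1: "fhat f R w' (x @ [\<sigma>]) = ?h @ lcp T"
      unfolding fhat_def[of f R w' "x @ [\<sigma>]"] using lcp_append[OF Tne] by simp
    have "the (f ((x @ [\<sigma>]) @ w')) = ?h @ res x (\<sigma> # w')"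
      using fhat_decomp[of x "\<sigma> # w'" f R] w'W Wx unfolding res_def by simp
    thus ?thesis using h1 unfolding lquot_def by simp
  qed
  have "res u (\<sigma> # w') = res v (\<sigma> # w')" unfolding res_def using Res w'W W_def by simp
  then show "lquot (fhat f R w' (u @ [\<sigma>])) (the (f ((u @ [\<sigma>]) @ w'))) =
        lquot (fhat f R w' (v @ [\<sigma>])) (the (f ((v @ [\<sigma>]) @ w')))"
    using conjunct2[OF gen[OF W_def T_def]] conjunct2[OF gen[OF WV TV]]
    by (simp only:)
qed

lemma left_class_eq: "left_class f R u = left_class f R v \<longleftrightarrow> left_rel f R u v"
proof
  assume "left_class f R u = left_class f R v"
  moreover have "v \<in> left_class f R v" by (simp add: left_class_def left_rel_refl)
  ultimately have "v \<in> left_class f R u" by simp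
  thus "left_rel f R u v" by (simp add: left_class_def)
next
  assume r: "left_rel f R u v"
  show "left_class f R u = left_class f R v"
    unfolding left_class_def using r left_rel_sym left_rel_trans by blast
qed

lemma lstate_Left: "lstate (Left_aut f R) u = left_class f R u"
proof (induction u rule: rev_induct)
  case Nil thus ?case by (simp add: lstate_def Left_aut_def)
next
  case (snoc \<sigma> u)
  have "lstate (Left_aut f R) (u @ [\<sigma>]) = ltrans (Left_aut f R) (left_class f R u) \<sigma>"
    using snoc by (simp add: lstate_def)
  also have "\<dots> = left_class f R ((SOME x. x \<in> left_class f R u) @ [\<sigma>])"
    by (simp add: Left_aut_def)
  also have "\<dots> = left_class f R (u @ [\<sigma>])"
  proof -
    have "u \<in> left_class f R u" by (simp add: left_class_def left_rel_refl)
    hence "(SOME x. x \<in> left_class f R u) \<in> left_class f R u" by (rule someI)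
    hence "left_rel f R u (SOME x. x \<in> left_class f R u)" by (simp add: left_class_def)
    thus ?thesis using left_rel_cong left_rel_sym left_class_eq by metis
  qed
  finally show ?case .
qed

lemma key:
  assumes D: "\<And>u w. u @ w \<in> dom f \<longleftrightarrow> Dm (s u) w"
    and V: "\<And>u w. u @ w \<in> dom f \<Longrightarrow> the (f (u @ w)) = A u (rstate R w) @ B (s u) w"
    and suv: "s u = s v"
  shows "left_rel f R u v"
  unfolding left_rel_def
proof (intro allI conjI impI)
  fix w
  show "u @ w \<in> dom f \<longleftrightarrow> v @ w \<in> dom f" using D suv by simp
  assume dw: "u @ w \<in> dom f"
  define T where "T = {B (s u) v' | v'. rstate R v' = rstate R w \<and> Dm (s u) v'}"
  have Tne: "T \<noteq> {}" using dw D T_def by auto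
  have gen: "lquot (fhat f R w x) (the (f (x @ w))) = lquot (lcp T) (B (s u) w)" if sx: "s x = s u" for x
  proof -
    define C where "C = {v'. rstate R v' = rstate R w \<and> Dm (s u) v'}"
    have C1: "{the (f (x @ v')) | v'. rstate R v' = rstate R w \<and> x @ v' \<in> dom f}
        = (\<lambda>v'. the (f (x @ v'))) ` C"
      unfolding C_def using D sx by auto
    have C2: "T = (\<lambda>v'. B (s u) v') ` C" unfolding T_def C_def by auto
    have "(\<lambda>v'. the (f (x @ v'))) ` C = (@) (A x (rstate R w)) ` T"
      unfolding C2 image_image
    proof (rule image_cong[OF refl])
      fix v' assume "v' \<in> C"
      hence "x @ v' \<in> dom f" "rstate R v' = rstate R w" unfolding C_def using D sx by auto
      thus "the (f (x @ v')) = A x (rstate R w) @ B (s u) v'" using V sx by metis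
    qed
    hence "{the (f (x @ v')) | v'. rstate R v' = rstate R w \<and> x @ v' \<in> dom f}
        = (@) (A x (rstate R w)) ` T" using C1 by simp
    hence "fhat f R w x = A x (rstate R w) @ lcp T"
      unfolding fhat_def using lcp_append[OF Tne] by simp
    moreover have "the (f (x @ w)) = A x (rstate R w) @ B (s u) w"
      using V[of x w] D[of x w] D[of u w] dw sx by simp
    ultimately show ?thesis unfolding lquot_def by simp
  qed
  show "lquot (fhat f R w u) (the (f (u @ w))) = lquot (fhat f R w v) (the (f (v @ w)))"
    using gen[of u] gen[of v] suv by simp
qed

definition rrun :: "('r, 'a) right_aut \<Rightarrow> 'a list \<Rightarrow> 'r \<Rightarrow> 'r" where
  "rrun R x r = foldr (\<lambda>\<sigma> q. rtrans R q \<sigma>) x r"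

definition lrun :: "('l, 'a) left_aut \<Rightarrow> 'l \<Rightarrow> 'a list \<Rightarrow> 'l" where
  "lrun L l x = foldl (ltrans L) l x"

definition bmA where
  "bmA L R \<omega> lam u r = lam (rrun R u r) @
     concat (map (\<lambda>i. \<omega> (lstate L (take i u)) (u ! i) (rrun R (drop (Suc i) u) r)) [0..<length u])"

definition bmB where
  "bmB L R \<omega> \<rho> l w = concat (map (\<lambda>j. \<omega> (lrun L l (take j w)) (w ! j) (rstate R (drop (Suc j) w))) [0..<length w])
     @ \<rho> (lrun L l w)"

lemma rstate_append: "rstate R (x @ y) = rrun R x (rstate R y)"
  unfolding rstate_def rrun_def by simp

lemma lstate_append: "lstate L (x @ y) = lrun L (lstate L x) y"
  unfolding lstate_def lrun_def by simp

lemma map_upt_add: "map g [0..<a + b] = map g [0..<a] @ map (\<lambda>j. g (a + j)) [0..<b]"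
  by (induction b) auto

lemma bm_decomp:
  "bm_output L R \<omega> lam \<rho> (u @ w) = bmA L R \<omega> lam u (rstate R w) @ bmB L R \<omega> \<rho> (lstate L u) w"
proof -
  have m1: "map (\<lambda>i. \<omega> (lstate L (take i (u @ w))) ((u @ w) ! i) (rstate R (drop (Suc i) (u @ w)))) [0..<length u]
     = map (\<lambda>i. \<omega> (lstate L (take i u)) (u ! i) (rrun R (drop (Suc i) u) (rstate R w))) [0..<length u]"
    by (auto simp: nth_append rstate_append)
  have m2: "map (\<lambda>j. \<omega> (lstate L (take (length u + j) (u @ w))) ((u @ w) ! (length u + j))
        (rstate R (drop (Suc (length u + j)) (u @ w)))) [0..<length w]
     = map (\<lambda>j. \<omega> (lrun L (lstate L u) (take j w)) (w ! j) (rstate R (drop (Suc j) w))) [0..<length w]"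
    by (auto simp: lstate_append)
  have "bm_output L R \<omega> lam \<rho> (u @ w) = lam (rstate R (u @ w)) @
     concat (map (\<lambda>i. \<omega> (lstate L (take i (u @ w))) ((u @ w) ! i) (rstate R (drop (Suc i) (u @ w)))) [0..<length u + length w])
     @ \<rho> (lstate L (u @ w))"
    unfolding bm_output_def by simp
  also have "\<dots> = lam (rstate R (u @ w)) @
     concat (map (\<lambda>i. \<omega> (lstate L (take i (u @ w))) ((u @ w) ! i) (rstate R (drop (Suc i) (u @ w)))) [0..<length u])
     @ concat (map (\<lambda>j. \<omega> (lstate L (take (length u + j) (u @ w))) ((u @ w) ! (length u + j))
        (rstate R (drop (Suc (length u + j)) (u @ w)))) [0..<length w])
     @ \<rho> (lstate L (u @ w))"
    unfolding map_upt_add by simp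
  also have "\<dots> = bmA L R \<omega> lam u (rstate R w) @ bmB L R \<omega> \<rho> (lstate L u) w"
    unfolding m1 m2 bmA_def bmB_def by (simp add: rstate_append lstate_append)
  finally show ?thesis .
qed

lemma rstate_mirror: "rstate (mirror_left A) w = lstate A (rev w)"
  unfolding rstate_def lstate_def mirror_left_def by (simp add: foldr_conv_foldl)

theorem proposition3p3:
  fixes L :: "('l, 'a) left_aut" and R :: "('r, 'a) right_aut"
    and \<omega> :: "'l \<Rightarrow> 'a \<Rightarrow> 'r \<Rightarrow> 'a list" and lam :: "'r \<Rightarrow> 'a list" and \<rho> :: "'l \<Rightarrow> 'a list"
    and f :: "'a list \<Rightarrow> 'a list option"
  assumes "bimachine_realizes L R \<omega> lam \<rho> f"
  shows "left_refines L (Left_aut f R) \<and> right_refines R (Right_aut f L)"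
proof
  have fin: "\<And>u. lstate L u \<in> lfinal L \<longleftrightarrow> rstate R u \<in> rfinal R"
    and fdef: "\<And>u. f u = (if lstate L u \<in> lfinal L then Some (bm_output L R \<omega> lam \<rho> u) else None)"
    using assms unfolding bimachine_realizes_def by auto
  have domf: "\<And>x. x \<in> dom f \<longleftrightarrow> lstate L x \<in> lfinal L" using fdef by (simp add: domIff)
  show "left_refines L (Left_aut f R)"
    unfolding left_refines_def lstate_Left
  proof (intro allI impI)
    fix u v assume "lstate L u = lstate L v"
    thus "left_class f R u = left_class f R v" unfolding left_class_eq
      by (rule key[where Dm = "\<lambda>l w. lrun L l w \<in> lfinal L" and A = "bmA L R \<omega> lam"
            and B = "bmB L R \<omega> \<rho>", rotated 2])
         (auto simp: domf lstate_append fdef bm_decomp)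
  qed
  show "right_refines R (Right_aut f L)"
    unfolding right_refines_def Right_aut_def rstate_mirror lstate_Left
  proof (intro allI impI)
    fix u v assume "rstate R u = rstate R v"
    hence "rstate R (rev (rev u)) = rstate R (rev (rev v))" by simp
    thus "left_class (mirror_trans f) (mirror_left L) (rev u) = left_class (mirror_trans f) (mirror_left L) (rev v)"
      unfolding left_class_eq
    proof (rule key[where s = "\<lambda>x. rstate R (rev x)" and Dm = "\<lambda>r w. rrun R (rev w) r \<in> rfinal R"
            and A = "\<lambda>u r. rev (bmB L R \<omega> \<rho> r (rev u))" and B = "\<lambda>r w. rev (bmA L R \<omega> lam (rev w) r)", rotated 2])
      fix x w
      show "x @ w \<in> dom (mirror_trans f) \<longleftrightarrow> rrun R (rev w) (rstate R (rev x)) \<in> rfinal R"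
      proof -
        have "x @ w \<in> dom (mirror_trans f) \<longleftrightarrow> rev w @ rev x \<in> dom f"
          by (simp add: mirror_trans_def domIff)
        also have "\<dots> \<longleftrightarrow> rstate R (rev w @ rev x) \<in> rfinal R" using domf fin by simp
        finally show ?thesis by (simp add: rstate_append)
      qed
      show "the (mirror_trans f (x @ w)) = rev (bmB L R \<omega> \<rho> (rstate (mirror_left L) w) (rev x))
             @ rev (bmA L R \<omega> lam (rev w) (rstate R (rev x)))"
        if "x @ w \<in> dom (mirror_trans f)"
        using that by (auto simp: mirror_trans_def fdef bm_decomp rstate_mirror split: if_splits)
    qed
  qed
qed

end
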